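(* For every $L\ge k_1+4\epsilon$ there is a number $\kappa(L)$ such that for all vertices $a,b$ of $\mathcal{CG}(\Sigma)$ with $d(a,b)\le 3L$, the pair $(a,b)$ has at most $\kappa(L)$ distinct $L$-channels.
   Context: $\Sigma$ is a compact orientable surface, $\mathcal{CG}(\Sigma)$ its curve graph (1-skeleton of Harvey's curve complex) with path metric $d$ (edges of length 1); $\delta\in\mathbb{N}$ is a hyperbolicity constant for it. Tight geodesics are those of Masur–Minsky/Bowditch. $\lambda=1000\delta$ and $\epsilon$ is a positive integer such that any $\lambda$-quasi-geodesic in $\mathcal{CG}(\Sigma)$ stays within $\epsilon$ of any geodesic joining its endpoints. Bowditch's constant $k_1$ (depending only on $\Sigma$) is such that, for some $K_1$ depending only on $\Sigma$: if $a,b$ are vertices, $r\in\mathbb{N}$, and $c$ lies on a tight geodesic from $a$ to $b$ with $d(a,c)\ge r+k_1$ and $d(b,c)\ge r+k_1$, then the set of vertices on tight geodesics between two points respectively $r$-close to $a$ and $b$, at distance at most $2\epsilon$ from $c$, has at most $K_1$ elements. Definition: for $L>0$ and vertices $a,b$ with $d(a,b)\le 3L$, an $L$-channel of $(a,b)$ is a tight geodesic $g_1$ of length $L$ which is contained in a tight geodesic $g_2$ of length $3L$ that starts at distance at most $2\epsilon$ from $a$ and ends at distance at most $2\epsilon$ from $b$, such that the endpoints of $g_2$ are at distance $L$ from $g_1$. *)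

theory Defs
  imports Complex_Main "HOL-Library.Sublist"
begin

text \<open>Abstract setting: the curve graph is given by its vertex type 'v and adjacency
relation E; tight geodesics by an abstract predicate on vertex lists.
A path / geodesic is a nonempty list of vertices; its length is the number of edges.\<close>

definition walk :: "('v \<Rightarrow> 'v \<Rightarrow> bool) \<Rightarrow> 'v list \<Rightarrow> bool" where
  "walk E p \<longleftrightarrow> p \<noteq> [] \<and> (\<forall>i. Suc i < length p \<longrightarrow> E (p ! i) (p ! Suc i))"

definition gdist :: "('v \<Rightarrow> 'v \<Rightarrow> bool) \<Rightarrow> 'v \<Rightarrow> 'v \<Rightarrow> nat" where
  "gdist E x y = (LEAST n. \<exists>p. walk E p \<and> hd p = x \<and> last p = y \<and> length p = Suc n)"

definition geodesic :: "('v \<Rightarrow> 'v \<Rightarrow> bool) \<Rightarrow> 'v list \<Rightarrow> bool" where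
  "geodesic E p \<longleftrightarrow> walk E p \<and> length p - 1 = gdist E (hd p) (last p)"

definition setdist :: "('v \<Rightarrow> 'v \<Rightarrow> bool) \<Rightarrow> 'v \<Rightarrow> 'v set \<Rightarrow> nat" where
  "setdist E v S = Min (gdist E v ` S)"

definition gromov_hyperbolic :: "('v \<Rightarrow> 'v \<Rightarrow> bool) \<Rightarrow> nat \<Rightarrow> bool" where
  "gromov_hyperbolic E \<delta> \<longleftrightarrow> (\<forall>x y z w.
      gdist E x y + gdist E z w
        \<le> max (gdist E x z + gdist E y w) (gdist E x w + gdist E y z) + 2 * \<delta>)"

text \<open>A (discrete) lam-quasi-geodesic: a vertex sequence p with
  |i-j|/lam - lam \<le> d(p_i,p_j) \<le> lam |i-j| + lam (lower bound written multiplied by lam).\<close>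
definition quasi_geodesic :: "('v \<Rightarrow> 'v \<Rightarrow> bool) \<Rightarrow> real \<Rightarrow> 'v list \<Rightarrow> bool" where
  "quasi_geodesic E lam p \<longleftrightarrow> p \<noteq> [] \<and> (\<forall>i j. i < length p \<and> j < length p \<longrightarrow>
      real (gdist E (p ! i) (p ! j)) \<le> lam * \<bar>real i - real j\<bar> + lam \<and>
      \<bar>real i - real j\<bar> \<le> lam * (real (gdist E (p ! i) (p ! j)) + lam))"

definition qg_stable :: "('v \<Rightarrow> 'v \<Rightarrow> bool) \<Rightarrow> real \<Rightarrow> nat \<Rightarrow> bool" where
  "qg_stable E lam \<epsilon> \<longleftrightarrow> (\<forall>p g. quasi_geodesic E lam p \<and> geodesic E g \<and>
      hd g = hd p \<and> last g = last p \<longrightarrow> (\<forall>v\<in>set p. \<exists>w\<in>set g. gdist E v w \<le> \<epsilon>))"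

definition bowditch_property ::
  "('v \<Rightarrow> 'v \<Rightarrow> bool) \<Rightarrow> ('v list \<Rightarrow> bool) \<Rightarrow> nat \<Rightarrow> nat \<Rightarrow> nat \<Rightarrow> bool" where
  "bowditch_property E tight \<epsilon> k1 K1 \<longleftrightarrow> (\<forall>a b c g r.
      tight g \<and> hd g = a \<and> last g = b \<and> c \<in> set g \<and>
      gdist E a c \<ge> r + k1 \<and> gdist E b c \<ge> r + k1 \<longrightarrow>
      (let S = {v. \<exists>a' b' h. gdist E a a' \<le> r \<and> gdist E b b' \<le> r \<and> tight h \<and>
                 hd h = a' \<and> last h = b' \<and> v \<in> set h \<and> gdist E v c \<le> 2 * \<epsilon>}
       in finite S \<and> card S \<le> K1))"

definition channel ::
  "('v \<Rightarrow> 'v \<Rightarrow> bool) \<Rightarrow> ('v list \<Rightarrow> bool) \<Rightarrow> nat \<Rightarrow> nat \<Rightarrow> 'v \<Rightarrow> 'v \<Rightarrow> 'v list \<Rightarrow> bool" where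
  "channel E tight \<epsilon> L a b g1 \<longleftrightarrow> tight g1 \<and> length g1 = Suc L \<and>
     (\<exists>g2. tight g2 \<and> length g2 = Suc (3 * L) \<and> sublist g1 g2 \<and>
        gdist E a (hd g2) \<le> 2 * \<epsilon> \<and> gdist E b (last g2) \<le> 2 * \<epsilon> \<and>
        setdist E (hd g2) (set g1) = L \<and> setdist E (last g2) (set g1) = L)"

end

theory Submission imports Defs begin

lemma walk_nonempty: "walk E p \<Longrightarrow> p \<noteq> []" by (simp add: walk_def)
lemma walk_single: "walk E [x]" by (simp add: walk_def)

lemma walk_take_drop:
  assumes "walk E p" "i \<le> j" "j < length p"
  shows "walk E (take (Suc (j-i)) (drop i p))"
  using assms unfolding walk_def by (auto simp: nth_take nth_drop min_def)

lemma gdist_le_walk: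
  assumes "walk E p" "hd p = x" "last p = y"
  shows "gdist E x y \<le> length p - 1"
proof -
  have "p \<noteq> []" using assms walk_nonempty by auto
  hence "length p = Suc (length p - 1)" by simp
  thus ?thesis unfolding gdist_def using assms by (intro Least_le) blast
qed

lemma gdist_walk_ex:
  assumes "\<And>x y. \<exists>p. walk E p \<and> hd p = x \<and> last p = y"
  shows "\<exists>p. walk E p \<and> hd p = x \<and> last p = y \<and> length p = Suc (gdist E x y)"
proof -
  obtain p where p: "walk E p" "hd p = x" "last p = y" using assms by blast
  hence "p \<noteq> []" using walk_nonempty by auto
  hence "\<exists>n p. walk E p \<and> hd p = x \<and> last p = y \<and> length p = Suc n" using p
    by (intro exI[of _ "length p - 1"] exI[of _ p]) auto
  from LeastI_ex[OF this] show ?thesis unfolding gdist_def by blast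
qed

lemma walk_sub_dist:
  assumes "walk E p" "i \<le> j" "j < length p"
  shows "gdist E (p!i) (p!j) \<le> j - i"
proof -
  let ?q = "take (Suc (j-i)) (drop i p)"
  have w: "walk E ?q" using walk_take_drop assms by blast
  have l: "length ?q = Suc (j-i)" using assms by auto
  have h: "hd ?q = p!i" using assms by (simp add: hd_drop_conv_nth hd_take)
  have qn: "?q \<noteq> []" using l by (metis Zero_not_Suc list.size(3))
  have "last ?q = ?q ! (length ?q - 1)" by (rule last_conv_nth[OF qn])
  also have "\<dots> = ?q ! (j-i)" using l by simp
  also have "\<dots> = drop i p ! (j-i)" by (rule nth_take) simp
  also have "\<dots> = p ! (i + (j-i))" using assms by (intro nth_drop) simp
  also have "\<dots> = p!j" using assms by simp
  finally have "last ?q = p!j" .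
  from gdist_le_walk[OF w h this] l show ?thesis by simp
qed

lemma walk_Cons2: "walk E (x#y#xs) \<longleftrightarrow> E x y \<and> walk E (y#xs)"
proof
  assume w: "walk E (x#y#xs)"
  have "Suc 0 < length (x#y#xs)" by simp
  hence 0: "E ((x#y#xs)!0) ((x#y#xs)!Suc 0)" using w unfolding walk_def by blast
  have "E ((y#xs)!i) ((y#xs)!Suc i)" if "Suc i < length (y#xs)" for i
  proof -
    have "Suc (Suc i) < length (x#y#xs)" using that by simp
    hence "E ((x#y#xs)!Suc i) ((x#y#xs)!Suc (Suc i))" using w unfolding walk_def by blast
    thus ?thesis by simp
  qed
  moreover have "E x y" using 0 by simp
  ultimately show "E x y \<and> walk E (y#xs)" unfolding walk_def by simp
next
  assume a: "E x y \<and> walk E (y#xs)"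
  show "walk E (x#y#xs)" unfolding walk_def
  proof (intro conjI allI impI)
    fix i assume i: "Suc i < length (x#y#xs)"
    show "E ((x#y#xs)!i) ((x#y#xs)!Suc i)"
    proof (cases i)
      case 0 thus ?thesis using a by simp
    next
      case (Suc k)
      hence "Suc k < length (y#xs)" using i by simp
      hence "E ((y#xs)!k) ((y#xs)!Suc k)" using a unfolding walk_def by blast
      thus ?thesis using Suc by simp
    qed
  qed simp
qed

lemma walk_append:
  assumes "walk E p" "walk E q" "last p = hd q"
  shows "walk E (p @ tl q)"
  using assms
proof (induction p)
  case Nil thus ?case by (simp add: walk_def)
next
  case (Cons x p)
  show ?case
  proof (cases p)
    case Nil
    then have "q \<noteq> []" using Cons walk_nonempty by auto
    then show ?thesis using Cons Nil by simp
  next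
    case (Cons y p')
    have "walk E (x#y#p')" using Cons \<open>walk E (x#p)\<close> by simp
    hence e: "E x y" and w: "walk E (y#p')" using walk_Cons2[of E x y p'] by auto
    have "walk E ((y#p') @ tl q)" using Cons.IH[OF _ Cons.prems(2)] w Cons Cons.prems(3) by simp
    thus ?thesis using e Cons by (simp add: walk_Cons2)
  qed
qed

lemma walk_rev:
  assumes sym: "\<And>x y. E x y \<Longrightarrow> E y x" and w: "walk E p"
  shows "walk E (rev p)"
  unfolding walk_def
proof (intro conjI allI impI)
  show "rev p \<noteq> []" using w walk_nonempty by auto
  fix i assume i: "Suc i < length (rev p)"
  define m where "m = length p - Suc (Suc i)"
  have m1: "Suc m = length p - Suc i" using i unfolding m_def by simp
  have "E (p!m) (p!Suc m)" using w i unfolding walk_def m_def by auto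
  hence "E (p!Suc m) (p!m)" by (rule sym)
  thus "E (rev p ! i) (rev p ! Suc i)" using i m1 by (simp add: rev_nth m_def)
qed

lemma gdist_refl: "gdist E x x = 0"
  using gdist_le_walk[OF walk_single[of E x]] by simp

lemma gdist_triangle:
  assumes conn: "\<And>x y. \<exists>p. walk E p \<and> hd p = x \<and> last p = y"
  shows "gdist E x z \<le> gdist E x y + gdist E y z"
proof -
  obtain p where p: "walk E p" "hd p = x" "last p = y" "length p = Suc (gdist E x y)"
    using gdist_walk_ex[OF conn] by blast
  obtain q where q: "walk E q" "hd q = y" "last q = z" "length q = Suc (gdist E y z)"
    using gdist_walk_ex[OF conn] by blast
  have w: "walk E (p @ tl q)" using walk_append[OF p(1) q(1)] p q by simp
  have pn: "p \<noteq> []" "q \<noteq> []" using p q walk_nonempty by auto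
  have h: "hd (p @ tl q) = x" using p pn by simp
  have l: "last (p @ tl q) = z"
  proof (cases "tl q = []")
    case True
    then have "q = [y]" using q pn by (metis list.collapse)
    thus ?thesis using True p q by simp
  next
    case False thus ?thesis using q pn by (simp add: last_tl)
  qed
  show ?thesis using gdist_le_walk[OF w h l] p q by simp
qed

lemma gdist_sym:
  assumes sym: "\<And>x y. E x y \<Longrightarrow> E y x"
    and conn: "\<And>x y. \<exists>p. walk E p \<and> hd p = x \<and> last p = y"
  shows "gdist E x y = gdist E y x"
proof -
  have *: "gdist E u w \<le> gdist E w u" for u w
  proof -
    obtain p where p: "walk E p" "hd p = w" "last p = u" "length p = Suc (gdist E w u)"
      using gdist_walk_ex[OF conn] by blast
    have pn: "p \<noteq> []" using p walk_nonempty by auto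
    show ?thesis using gdist_le_walk[OF walk_rev[OF sym p(1)]] p pn
      by (simp add: hd_rev last_rev)
  qed
  show ?thesis using *[of x y] *[of y x] by simp
qed

lemma geodesic_pos:
  assumes conn: "\<And>x y. \<exists>p. walk E p \<and> hd p = x \<and> last p = y"
    and g: "geodesic E g" and i: "i < length g"
  shows "gdist E (hd g) (g!i) = i \<and> gdist E (g!i) (last g) = length g - 1 - i"
proof -
  have w: "walk E g" and D: "length g - 1 = gdist E (hd g) (last g)" using g geodesic_def by auto
  have gn: "g \<noteq> []" using w walk_nonempty by auto
  have h: "hd g = g!0" using gn by (simp add: hd_conv_nth)
  have l: "last g = g!(length g - 1)" using gn by (simp add: last_conv_nth)
  have 1: "gdist E (hd g) (g!i) \<le> i" using walk_sub_dist[OF w, of 0 i] i h by simp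
  have 2: "gdist E (g!i) (last g) \<le> length g - 1 - i" using walk_sub_dist[OF w, of i "length g - 1"] i l by simp
  have 3: "gdist E (hd g) (last g) \<le> gdist E (hd g) (g!i) + gdist E (g!i) (last g)"
    by (rule gdist_triangle[OF conn])
  show ?thesis using 1 2 3 D i by linarith
qed


lemma close_lemma:
  fixes E :: "'v \<Rightarrow> 'v \<Rightarrow> bool" and \<delta> \<epsilon> k1 L :: nat
  assumes sym: "\<And>x y. E x y \<Longrightarrow> E y x"
    and conn: "\<And>x y. \<exists>p. walk E p \<and> hd p = x \<and> last p = y"
    and hyp: "gromov_hyperbolic E \<delta>"
    and eps_pos: "\<epsilon> > 0"
    and stable: "qg_stable E (1000 * real \<delta>) \<epsilon>"
    and L: "L \<ge> k1 + 4 * \<epsilon>"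
    and gs: "geodesic E gs" "hd gs = a" "last gs = b"
    and g2: "geodesic E g2" "length g2 = Suc (3 * L)" "v \<in> set g2"
    and da: "gdist E a (hd g2) \<le> 2 * \<epsilon>" and db: "gdist E b (last g2) \<le> 2 * \<epsilon>"
    and Lv1: "L \<le> gdist E (hd g2) v" and Lv2: "L \<le> gdist E (last g2) v"
  shows "\<exists>t < length gs. gdist E v (gs!t) \<le> \<epsilon>"
proof -
  define d where "d = gdist E"
  have ds: "d x y = d y x" for x y unfolding d_def by (rule gdist_sym[OF sym conn])
  have tri: "d x z \<le> d x y + d y z" for x y z unfolding d_def by (rule gdist_triangle[OF conn])
  define a' where "a' = hd g2"
  define b' where "b' = last g2"
  define D where "D = d a b"
  have lgs: "length gs = Suc D"
  proof -
    have "walk E gs" "length gs - 1 = D" using gs unfolding geodesic_def D_def d_def by auto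
    moreover have "gs \<noteq> []" using calculation(1) walk_nonempty by auto
    ultimately show ?thesis by (cases gs) auto
  qed
  obtain k where k: "k < length g2" "v = g2!k" using g2(3) by (metis in_set_conv_nth)
  have kp: "d a' v = k" "d v b' = 3*L - k" using geodesic_pos[OF conn g2(1) k(1)] k g2(2)
    unfolding a'_def b'_def d_def by auto
  have F1: "d a' v + d v b' = 3 * L" using kp k g2(2) by simp
  have da': "d a a' \<le> 2*\<epsilon>" "d b b' \<le> 2*\<epsilon>" using da db unfolding a'_def b'_def d_def by auto
  have Lv: "L \<le> d a' v" "L \<le> d b' v" using Lv1 Lv2 unfolding a'_def b'_def d_def by auto
  have F2: "3 * L \<le> 4*\<epsilon> + D"
  proof -
    have e: "d a' b' = 3*L" using g2 unfolding geodesic_def a'_def b'_def d_def by simp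
    have "d a' b' \<le> d a' a + d a b' " by (rule tri)
    moreover have "d a b' \<le> d a b + d b b'" by (rule tri)
    ultimately show ?thesis using e da' ds[of a' a] unfolding D_def by linarith
  qed
  define Av where "Av = d a v"
  define Bv where "Bv = d b v"
  have Av1: "Av \<le> 2*\<epsilon> + d a' v" using tri[of a v a'] da' unfolding Av_def by linarith
  have Av2: "d a' v \<le> 2*\<epsilon> + Av" using tri[of a' v a] da' ds[of a' a] unfolding Av_def by linarith
  have Bv1: "Bv \<le> 2*\<epsilon> + d b' v" using tri[of b v b'] da' unfolding Bv_def by linarith
  have Bv2: "d b' v \<le> 2*\<epsilon> + Bv" using tri[of b' v b] da' ds[of b' b] unfolding Bv_def by linarith
  have F3: "d b' v = 3*L - d a' v" using F1 ds[of v b'] by simp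
  show ?thesis
  proof (cases "1 \<le> \<delta> \<and> 8 * \<epsilon> \<le> (1000 * \<delta>)^2")
    case True
    define lam where "lam = 1000 * real \<delta>"
    have lam1: "1 \<le> lam" using True unfolding lam_def by simp
    have lam2: "real (8*\<epsilon>) \<le> lam^2" unfolding lam_def using True
      by (metis of_nat_le_iff of_nat_mult of_nat_numeral of_nat_power)
    obtain q1 where q1: "walk E q1" "hd q1 = a" "last q1 = v" "length q1 = Suc (d a v)"
      using gdist_walk_ex[OF conn] unfolding d_def by blast
    obtain q2 where q2: "walk E q2" "hd q2 = v" "last q2 = b" "length q2 = Suc (d v b)"
      using gdist_walk_ex[OF conn] unfolding d_def by blast
    define p where "p = q1 @ tl q2"
    define N where "N = d a v + d v b"
    have pw: "walk E p" unfolding p_def using walk_append[OF q1(1) q2(1)] q1 q2 by simp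
    have qn: "q1 \<noteq> []" "q2 \<noteq> []" using q1 q2 walk_nonempty by auto
    have ph: "hd p = a" using q1 qn unfolding p_def by simp
    have pl: "last p = b"
    proof (cases "tl q2 = []")
      case True
      then have "q2 = [v]" using q2 qn by (metis list.collapse)
      thus ?thesis using True q1 q2 unfolding p_def by simp
    next
      case False thus ?thesis using q2 qn unfolding p_def by (simp add: last_tl)
    qed
    have plen: "length p = Suc N" unfolding p_def N_def using q1 q2 by simp
    have vp: "v \<in> set p" using q1 qn unfolding p_def by (metis Un_iff last_in_set set_append)
    have NB: "N \<le> D + 8*\<epsilon>" unfolding N_def using Av1 Bv1 F1 F2 ds[of v b] ds[of b' v]
      unfolding Av_def Bv_def by linarith
    have p0: "p!0 = a" using ph pw walk_nonempty by (metis hd_conv_nth)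
    have pN: "p!N = b" using pl pw walk_nonempty plen by (metis diff_Suc_1 last_conv_nth)
    have key: "d (p!i) (p!j) \<le> j - i \<and> j - i \<le> d (p!i) (p!j) + 8*\<epsilon>"
      if ij: "i \<le> j" "j < length p" for i j
    proof -
      have 1: "d (p!i) (p!j) \<le> j - i" using walk_sub_dist[OF pw ij] unfolding d_def .
      have 2: "d a (p!i) \<le> i" using walk_sub_dist[OF pw, of 0 i] ij p0 unfolding d_def by simp
      have 3: "d (p!j) b \<le> N - j" using walk_sub_dist[OF pw, of j N] ij pN plen unfolding d_def by simp
      have 4: "D \<le> d a (p!i) + d (p!i) (p!j) + d (p!j) b"
        unfolding D_def using tri[of a b "p!i"] tri[of "p!i" b "p!j"] by linarith
      show ?thesis using 1 2 3 4 NB ij plen by linarith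
    qed
    have rb: "real (d (p!i) (p!j)) \<le> lam * \<bar>real i - real j\<bar> + lam \<and>
              \<bar>real i - real j\<bar> \<le> lam * (real (d (p!i) (p!j)) + lam)"
      if ij: "i \<le> j" "j < length p" for i j
    proof -
      have k1: "d (p!i) (p!j) \<le> j - i" and k2: "j - i \<le> d (p!i) (p!j) + 8*\<epsilon>" using key[OF ij] by auto
      define x where "x = real (d (p!i) (p!j))"
      define y where "y = real j - real i"
      have ab: "\<bar>real i - real j\<bar> = y" unfolding y_def using ij by simp
      have xy: "x \<le> y" using k1 ij unfolding x_def y_def by (simp add: of_nat_diff)
      have yx: "y \<le> x + real (8*\<epsilon>)" using k2 ij unfolding x_def y_def
        by (metis of_nat_add of_nat_diff of_nat_le_iff)
      have x0: "0 \<le> x" unfolding x_def by simp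
      have "x \<le> lam * x" using lam1 x0 by (simp add: mult_le_cancel_right1)
      moreover have "y \<le> lam * y" using lam1 x0 xy by (simp add: mult_le_cancel_right1)
      moreover have "lam * (x + lam) = lam * x + lam^2" by (simp add: algebra_simps power2_eq_square)
      ultimately show ?thesis using ab xy yx lam1 lam2 x0
        unfolding x_def[symmetric] ab by linarith
    qed
    have qg: "quasi_geodesic E (1000 * real \<delta>) p"
      unfolding quasi_geodesic_def lam_def[symmetric] d_def[symmetric]
    proof (intro conjI allI impI)
      show "p \<noteq> []" using pw walk_nonempty by auto
      fix i j assume ij: "i < length p \<and> j < length p"
      show "real (d (p ! i) (p ! j)) \<le> lam * \<bar>real i - real j\<bar> + lam"
        using rb[of i j] rb[of j i] ij ds[of "p!i" "p!j"] by (cases "i \<le> j") (auto simp: abs_minus_commute)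
      show "\<bar>real i - real j\<bar> \<le> lam * (real (d (p ! i) (p ! j)) + lam)"
        using rb[of i j] rb[of j i] ij ds[of "p!i" "p!j"] by (cases "i \<le> j") (auto simp: abs_minus_commute)
    qed
    have c: "quasi_geodesic E (1000 * real \<delta>) p \<and> geodesic E gs \<and> hd gs = hd p \<and> last gs = last p"
      using qg gs ph pl by simp
    have "\<forall>v\<in>set p. \<exists>w\<in>set gs. gdist E v w \<le> \<epsilon>"
      using stable[unfolded qg_stable_def, rule_format, OF c] by blast
    hence "\<exists>w\<in>set gs. gdist E v w \<le> \<epsilon>" using vp by blast
    then obtain w where "w \<in> set gs" "gdist E v w \<le> \<epsilon>" by blast
    thus ?thesis by (metis in_set_conv_nth)
  next
    case False
    have e4: "4 * \<delta> \<le> \<epsilon>"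
    proof (cases "\<delta> = 0")
      case True thus ?thesis by simp
    next
      case f: False
      hence "(1000*\<delta>)^2 < 8*\<epsilon>" using False by simp
      moreover have "32 * \<delta> \<le> (1000*\<delta>)^2" using f by (simp add: power2_eq_square)
      ultimately show ?thesis by linarith
    qed
    have H: "d x y + d z w \<le> max (d x z + d y w) (d x w + d y z) + 2 * \<delta>" for x y z w
      using hyp unfolding gromov_hyperbolic_def d_def by blast
    have i1: "d a' b' + d a v \<le> max (d a' a + d b' v) (d a' v + d b' a) + 2 * \<delta>" by (rule H)
    have i2: "d a b' + d b v \<le> max (d a b + d b' v) (d a v + d b' b) + 2 * \<delta>" by (rule H)
    have e: "d a' b' = 3*L" using g2 unfolding geodesic_def a'_def b'_def d_def by simp
    have sA: "d a' a = d a a'" "d b' a = d a b'" "d b' b = d b b'" using ds by auto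
    have P1: "Av + d b' v \<le> d a b' + 2*\<delta>"
      using i1 e sA da' Lv Av2 F3 L eps_pos e4 unfolding Av_def[symmetric] max_def
      by (auto split: if_splits)
    have P: "Av + Bv \<le> D + 4*\<delta>"
      using i2 P1 sA da' Lv Bv2 F3 L eps_pos e4 unfolding Av_def[symmetric] Bv_def[symmetric] D_def[symmetric] max_def
      by (auto split: if_splits)
    have tr1: "Bv \<le> Av + D" using tri[of b v a] ds[of b a] unfolding Av_def Bv_def D_def by linarith
    have tr2: "Av \<le> D + Bv" using tri[of a v b] unfolding Av_def Bv_def D_def by linarith
    define t where "t = (Av + D - Bv) div 2"
    have tD: "t \<le> D" using tr1 tr2 unfolding t_def by linarith
    have tl: "t < length gs" using tD lgs by simp
    have gp: "d a (gs!t) = t" "d (gs!t) b = D - t" using geodesic_pos[OF conn gs(1) tl] gs lgs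
      unfolding d_def by auto
    have i3: "d a b + d v (gs!t) \<le> max (d a v + d b (gs!t)) (d a (gs!t) + d b v) + 2 * \<delta>" by (rule H)
    have t2: "2*t \<le> Av + D - Bv" "Av + D - Bv \<le> 2*t + 1" unfolding t_def by auto
    have "d v (gs!t) \<le> 4*\<delta>"
      using i3 gp ds[of b "gs!t"] P tr1 tr2 t2 tD unfolding Av_def[symmetric] Bv_def[symmetric] D_def[symmetric] max_def
      by (auto split: if_splits)
    thus ?thesis using tl e4 unfolding d_def by (intro exI[of _ t]) auto
  qed
qed


theorem lemma1p8:
  fixes E :: "'v \<Rightarrow> 'v \<Rightarrow> bool"
    and tight :: "'v list \<Rightarrow> bool"
    and \<delta> \<epsilon> k1 K1 L :: nat
  assumes sym: "\<And>x y. E x y \<Longrightarrow> E y x"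
    and irrefl: "\<And>x. \<not> E x x"
    and connected: "\<And>x y. \<exists>p. walk E p \<and> hd p = x \<and> last p = y"
    and tight_geod: "\<And>g. tight g \<Longrightarrow> geodesic E g"
    and tight_exists: "\<And>x y. \<exists>g. tight g \<and> hd g = x \<and> last g = y"
    and tight_sub: "\<And>g h. tight g \<Longrightarrow> h \<noteq> [] \<Longrightarrow> sublist h g \<Longrightarrow> tight h"
    and tight_rev: "\<And>g. tight g \<Longrightarrow> tight (rev g)"
    and hyp: "gromov_hyperbolic E \<delta>"
    and eps_pos: "\<epsilon> > 0"
    and stable: "qg_stable E (1000 * real \<delta>) \<epsilon>"
    and bowditch: "bowditch_property E tight \<epsilon> k1 K1"
    and L: "L \<ge> k1 + 4 * \<epsilon>"
  shows "\<exists>\<kappa>::nat. \<forall>a b. gdist E a b \<le> 3 * L \<longrightarrow>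
           finite {g1. channel E tight \<epsilon> L a b g1} \<and>
           card {g1. channel E tight \<epsilon> L a b g1} \<le> \<kappa>"
proof (intro exI allI impI conjI)
  fix a b assume dab: "gdist E a b \<le> 3 * L"
  define d where "d = gdist E"
  have ds: "d x y = d y x" for x y unfolding d_def by (rule gdist_sym[OF sym connected])
  have tri: "d x z \<le> d x y + d y z" for x y z unfolding d_def by (rule gdist_triangle[OF connected])
  obtain gs where gs: "tight gs" "hd gs = a" "last gs = b" using tight_exists by blast
  have gsg: "geodesic E gs" using tight_geod gs by blast
  define D where "D = d a b"
  have lgs: "length gs = Suc D"
  proof -
    have "walk E gs" "length gs - 1 = D" using gsg gs unfolding geodesic_def D_def d_def by auto
    moreover have "gs \<noteq> []" using calculation(1) walk_nonempty by auto
    ultimately show ?thesis by (cases gs) auto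
  qed
  define S where "S c = {v. \<exists>a' b' h. gdist E a a' \<le> 2*\<epsilon> \<and> gdist E b b' \<le> 2*\<epsilon> \<and> tight h \<and>
                 hd h = a' \<and> last h = b' \<and> v \<in> set h \<and> gdist E v c \<le> 2 * \<epsilon>}" for c
  define I where "I = {c \<in> set gs. 2*\<epsilon> + k1 \<le> gdist E a c \<and> 2*\<epsilon> + k1 \<le> gdist E b c}"
  define T where "T = (\<Union>c\<in>I. S c)"
  have Sfin: "finite (S c) \<and> card (S c) \<le> K1" if "c \<in> I" for c
  proof -
    have "tight gs \<and> hd gs = a \<and> last gs = b \<and> c \<in> set gs \<and>
      gdist E a c \<ge> 2*\<epsilon> + k1 \<and> gdist E b c \<ge> 2*\<epsilon> + k1" using gs that unfolding I_def by auto
    from bowditch[unfolded bowditch_property_def, rule_format, OF this]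
    show ?thesis unfolding S_def Let_def .
  qed
  have Ifin: "finite I" unfolding I_def by simp
  have Tfin: "finite T" unfolding T_def using Ifin Sfin by blast
  have "card T \<le> (\<Sum>c\<in>I. card (S c))" unfolding T_def by (rule card_UN_le[OF Ifin])
  also have "\<dots> \<le> card I * K1" using Sfin sum_bounded_above[of I "\<lambda>c. card (S c)" K1] by simp
  also have "\<dots> \<le> (3*L+1) * K1"
  proof -
    have "card I \<le> card (set gs)" unfolding I_def by (intro card_mono) auto
    also have "\<dots> \<le> length gs" by (rule card_length)
    finally show ?thesis using lgs dab unfolding D_def d_def by (intro mult_right_mono) auto
  qed
  finally have cT: "card T \<le> (3*L+1) * K1" .
  have key: "set g1 \<subseteq> T \<and> length g1 = Suc L" if ch: "channel E tight \<epsilon> L a b g1" for g1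
  proof
    show "length g1 = Suc L" using ch unfolding channel_def by simp
    obtain g2 where g2: "tight g2" "length g2 = Suc (3 * L)" "sublist g1 g2"
      "gdist E a (hd g2) \<le> 2 * \<epsilon>" "gdist E b (last g2) \<le> 2 * \<epsilon>"
      "setdist E (hd g2) (set g1) = L" "setdist E (last g2) (set g1) = L"
      using ch unfolding channel_def by blast
    show "set g1 \<subseteq> T"
    proof
      fix v assume v: "v \<in> set g1"
      have v2: "v \<in> set g2" using v g2(3) set_mono_sublist by blast
      have Lv1: "L \<le> gdist E (hd g2) v" using g2(6) v unfolding setdist_def
        by (metis List.finite_set Min_le finite_imageI imageI)
      have Lv2: "L \<le> gdist E (last g2) v" using g2(7) v unfolding setdist_def
        by (metis List.finite_set Min_le finite_imageI imageI)
      obtain t where t: "t < length gs" "gdist E v (gs!t) \<le> \<epsilon>"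
        using close_lemma[OF sym connected hyp eps_pos stable L gsg gs(2,3) tight_geod[OF g2(1)] g2(2) v2
          g2(4,5) Lv1 Lv2] by blast
      have g2g: "geodesic E g2" using tight_geod g2 by blast
      have avl: "L \<le> 2*\<epsilon> + d a v" using Lv1 g2(4) tri[of "hd g2" v a] ds[of a "hd g2"]
        unfolding d_def by linarith
      have bvl: "L \<le> 2*\<epsilon> + d b v" using Lv2 g2(5) tri[of "last g2" v b] ds[of b "last g2"]
        unfolding d_def by linarith
      have DL: "3*L \<le> 4*\<epsilon> + D"
      proof -
        have e: "d (hd g2) (last g2) = 3*L" using g2g g2(2) unfolding geodesic_def d_def by simp
        have "d (hd g2) (last g2) \<le> d (hd g2) a + d a (last g2)" by (rule tri)
        moreover have "d a (last g2) \<le> d a b + d b (last g2)" by (rule tri)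
        ultimately show ?thesis using e g2(4,5) ds[of "hd g2" a] unfolding D_def d_def by linarith
      qed
      have gp: "d a (gs!t) = t" "d (gs!t) b = D - t" using geodesic_pos[OF connected gsg t(1)] gs lgs
        unfolding d_def by auto
      have tlo: "d a v \<le> t + \<epsilon>" using tri[of a v "gs!t"] gp t(2) ds[of v "gs!t"] unfolding d_def by linarith
      have thi: "d b v \<le> (D - t) + \<epsilon>" using tri[of b v "gs!t"] gp t(2) ds[of v "gs!t"] ds[of b "gs!t"]
        unfolding d_def by linarith
      define t' where "t' = max (2*\<epsilon> + k1) (min t (D - (2*\<epsilon> + k1)))"
      have t'1: "2*\<epsilon> + k1 \<le> t'" "t' \<le> D - (2*\<epsilon> + k1)" "t' \<le> t + \<epsilon>" "t \<le> t' + \<epsilon>"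
        using avl bvl tlo thi DL L t(1) lgs unfolding t'_def by auto
      have t'l: "t' < length gs" using t'1 lgs by simp
      have gp': "d a (gs!t') = t'" "d (gs!t') b = D - t'" using geodesic_pos[OF connected gsg t'l] gs lgs
        unfolding d_def by auto
      have dtt: "d (gs!t) (gs!t') \<le> \<epsilon>"
      proof (cases "t \<le> t'")
        case True thus ?thesis using walk_sub_dist[of E gs t t'] gsg t'l t'1 unfolding geodesic_def d_def by auto
      next
        case False thus ?thesis using walk_sub_dist[of E gs t' t] gsg t t'1 ds[of "gs!t" "gs!t'"]
          unfolding geodesic_def d_def by auto
      qed
      have vc: "gdist E v (gs!t') \<le> 2*\<epsilon>" using tri[of v "gs!t'" "gs!t"] t(2) dtt unfolding d_def by linarith
      have cI: "gs!t' \<in> I" unfolding I_def using t'l t'1 gp' ds[of b "gs!t'"] unfolding d_def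
        by (auto simp: nth_mem)
      have "v \<in> S (gs!t')" unfolding S_def using g2(1,4,5) v2 vc by blast
      thus "v \<in> T" unfolding T_def using cI by blast
    qed
  qed
  have sub: "{g1. channel E tight \<epsilon> L a b g1} \<subseteq> {xs. set xs \<subseteq> T \<and> length xs = Suc L}"
    using key by blast
  have fl: "finite {xs. set xs \<subseteq> T \<and> length xs = Suc L}" using finite_lists_length_eq[OF Tfin] .
  show "finite {g1. channel E tight \<epsilon> L a b g1}" using finite_subset[OF sub fl] .
  have "card {g1. channel E tight \<epsilon> L a b g1} \<le> card {xs. set xs \<subseteq> T \<and> length xs = Suc L}"
    by (rule card_mono[OF fl sub])
  also have "\<dots> = card T ^ Suc L" by (rule card_lists_length_eq[OF Tfin])
  also have "\<dots> \<le> ((3*L+1) * K1) ^ Suc L" using cT by (rule power_mono) simp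
  finally show "card {g1. channel E tight \<epsilon> L a b g1} \<le> ((3*L+1) * K1) ^ Suc L" .
qed

end
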